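(* Let $\mathfrak R=(\mathcal B,\mathcal S,\pi)$ be a return risk measurement regime such that $\mathcal S$ is a cone and $\pi$ is positively homogeneous, and let $\mathcal S_1=\{Z\in\mathcal S:\pi(Z)=1\}$. Then for all $X\in\mathcal C$, $$\eta_{\mathfrak R}(X)=\inf\{\lambda>0: X/\lambda\in\mathcal B\cdot\mathcal S_1\}.$$ Moreover, $\mathcal B\cdot\mathcal S_1$ is monotone in the sense that for all $X\in\mathcal B\cdot\mathcal S_1$ and all $Y\in\mathcal C$ with $Y\le X$ a.s., we have $Y\in\mathcal B\cdot\mathcal S_1$.
   Context: Let $(\Omega,\mathcal F,P)$ be a probability space, $L^0$ the space of real random variables with the a.s. order, $L^0_{++}=\{X\in L^0:X>0\text{ a.s.}\}$. For $\mathcal A,\mathcal D\subset L^0_{++}$ write $\mathcal A\cdot\mathcal D=\{AD:A\in\mathcal A,D\in\mathcal D\}$ and $\frac{\mathcal A}{\mathcal D}=\{AD^{-1}:A\in\mathcal A,D\in\mathcal D\}$. Setting: nonempty sets $\mathcal C,\mathcal S,\mathcal K\subset L^0_{++}$ (model set, security set, set of relative losses) with $\frac{\mathcal C}{\mathcal S}\subset\mathcal K$; a pricing map $\pi\colon\mathcal S\to(0,\infty)$; a relative acceptance set $\mathcal B$, i.e. a nonempty proper subset of $\mathcal K$ such that $X\in\mathcal B$, $Y\in\mathcal K$, $Y\le X$ imply $Y\in\mathcal B$. $\mathfrak R=(\mathcal B,\mathcal S,\pi)$ is a return risk measurement regime, and $\eta_{\mathfrak R}(X)=\inf\{\pi(Z):Z\in\mathcal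 S,\ X/Z\in\mathcal B\}$, $X\in\mathcal C$ ($\inf\emptyset=\infty$), is the MARRM. A set $\mathcal A$ is a cone if $\lambda\mathcal A\subset\mathcal A$ for all $\lambda>0$; $\pi$ is positively homogeneous if $\pi(\lambda Z)=\lambda\pi(Z)$ for $\lambda>0$, $Z\in\mathcal S$. *)

theory Defs
  imports "HOL-Probability.Probability"
begin

text \<open>Elements of L^0 are represented by measurable real functions on the sample
space; equalities and inequalities between random variables are understood almost surely.\<close>

definition L0pp :: "'a measure \<Rightarrow> ('a \<Rightarrow> real) set" where
  "L0pp M = {X \<in> borel_measurable M. AE \<omega> in M. X \<omega> > 0}"

definition setprod :: "'a measure \<Rightarrow> ('a \<Rightarrow> real) set \<Rightarrow> ('a \<Rightarrow> real) set \<Rightarrow> ('a \<Rightarrow> real) set" where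
  "setprod M A D = {W \<in> borel_measurable M. \<exists>a\<in>A. \<exists>d\<in>D. AE \<omega> in M. W \<omega> = a \<omega> * d \<omega>}"

definition setquot :: "'a measure \<Rightarrow> ('a \<Rightarrow> real) set \<Rightarrow> ('a \<Rightarrow> real) set \<Rightarrow> ('a \<Rightarrow> real) set" where
  "setquot M A D = {W \<in> borel_measurable M. \<exists>a\<in>A. \<exists>d\<in>D. AE \<omega> in M. W \<omega> = a \<omega> / d \<omega>}"

definition rel_acceptance_set :: "'a measure \<Rightarrow> ('a \<Rightarrow> real) set \<Rightarrow> ('a \<Rightarrow> real) set \<Rightarrow> bool" where
  "rel_acceptance_set M K B \<longleftrightarrow> B \<noteq> {} \<and> B \<subset> K \<and>
     (\<forall>X\<in>B. \<forall>Y\<in>K. (AE \<omega> in M. Y \<omega> \<le> X \<omega>) \<longrightarrow> Y \<in> B)"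

definition is_cone :: "('a \<Rightarrow> real) set \<Rightarrow> bool" where
  "is_cone A \<longleftrightarrow> (\<forall>l::real. l > 0 \<longrightarrow> (\<forall>Z\<in>A. (\<lambda>\<omega>. l * Z \<omega>) \<in> A))"

definition pos_homogeneous :: "('a \<Rightarrow> real) set \<Rightarrow> (('a \<Rightarrow> real) \<Rightarrow> real) \<Rightarrow> bool" where
  "pos_homogeneous S \<pi> \<longleftrightarrow> (\<forall>l::real. l > 0 \<longrightarrow> (\<forall>Z\<in>S. \<pi> (\<lambda>\<omega>. l * Z \<omega>) = l * \<pi> Z))"

text \<open>MARRM, with values in the extended reals (inf of the empty set is infinity).\<close>
definition MARRM :: "('a \<Rightarrow> real) set \<Rightarrow> ('a \<Rightarrow> real) set \<Rightarrow> (('a \<Rightarrow> real) \<Rightarrow> real)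
    \<Rightarrow> ('a \<Rightarrow> real) \<Rightarrow> ereal" where
  "MARRM B S \<pi> X = Inf {ereal (\<pi> Z) | Z. Z \<in> S \<and> (\<lambda>\<omega>. X \<omega> / Z \<omega>) \<in> B}"

end

theory Submission
  imports Defs
begin

theorem mainTheorem2:
  fixes M :: "'a measure" and C S K B :: "('a \<Rightarrow> real) set"
    and \<pi> :: "('a \<Rightarrow> real) \<Rightarrow> real"
  assumes "prob_space M"
    and "C \<noteq> {}" "S \<noteq> {}" "K \<noteq> {}"
    and "C \<subseteq> L0pp M" "S \<subseteq> L0pp M" "K \<subseteq> L0pp M"
    and "setquot M C S \<subseteq> K"
    and "\<forall>Z\<in>S. \<pi> Z > 0"
    and "rel_acceptance_set M K B"
    and "is_cone S"
    and "pos_homogeneous S \<pi>"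
  shows "(\<forall>X\<in>C. MARRM B S \<pi> X =
            Inf {ereal l | l. l > 0 \<and> (\<lambda>\<omega>. X \<omega> / l) \<in> setprod M B {Z \<in> S. \<pi> Z = 1}})
       \<and> (\<forall>X\<in>setprod M B {Z \<in> S. \<pi> Z = 1}. \<forall>Y\<in>C.
            (AE \<omega> in M. Y \<omega> \<le> X \<omega>) \<longrightarrow> Y \<in> setprod M B {Z \<in> S. \<pi> Z = 1})"
proof
  have Smeas: "Z \<in> borel_measurable M" "AE \<omega> in M. Z \<omega> > 0" if "Z \<in> S" for Z
    using assms(6) that by (auto simp: L0pp_def)
  have Cmeas: "X \<in> borel_measurable M" if "X \<in> C" for X
    using assms(5) that by (auto simp: L0pp_def)
  have BK: "B \<subseteq> K" and down: "\<And>X Y. X \<in> B \<Longrightarrow> Y \<in> K \<Longrightarrow> (AE \<omega> in M. Y \<omega> \<le> X \<omega>) \<Longrightarrow> Y \<in> B"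
    using assms(10) unfolding rel_acceptance_set_def by auto
  have quotK: "(\<lambda>\<omega>. X \<omega> / Z \<omega>) \<in> K" if "X \<in> C" "Z \<in> S" for X Z
  proof -
    have "(\<lambda>\<omega>. X \<omega> / Z \<omega>) \<in> setquot M C S"
      unfolding setquot_def using that Cmeas Smeas by auto
    then show ?thesis using assms(8) by auto
  qed
  have cone: "(\<lambda>\<omega>. l * Z \<omega>) \<in> S" if "l > 0" "Z \<in> S" for l Z
    using assms(11) that unfolding is_cone_def by auto
  have hom: "\<pi> (\<lambda>\<omega>. l * Z \<omega>) = l * \<pi> Z" if "l > 0" "Z \<in> S" for l Z
    using assms(12) that unfolding pos_homogeneous_def by auto
  show "\<forall>X\<in>C. MARRM B S \<pi> X =
            Inf {ereal l | l. l > 0 \<and> (\<lambda>\<omega>. X \<omega> / l) \<in> setprod M B {Z \<in> S. \<pi> Z = 1}}"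
  proof
    fix X assume X: "X \<in> C"
    have "{ereal (\<pi> Z) | Z. Z \<in> S \<and> (\<lambda>\<omega>. X \<omega> / Z \<omega>) \<in> B}
        = {ereal l | l. l > 0 \<and> (\<lambda>\<omega>. X \<omega> / l) \<in> setprod M B {Z \<in> S. \<pi> Z = 1}}"
    proof (intro equalityI subsetI)
      fix e assume "e \<in> {ereal (\<pi> Z) | Z. Z \<in> S \<and> (\<lambda>\<omega>. X \<omega> / Z \<omega>) \<in> B}"
      then obtain Z where Z: "Z \<in> S" "(\<lambda>\<omega>. X \<omega> / Z \<omega>) \<in> B" and e: "e = ereal (\<pi> Z)" by auto
      define l where "l = \<pi> Z"
      have l: "l > 0" using assms(9) Z l_def by auto
      define d where "d = (\<lambda>\<omega>. (1/l) * Z \<omega>)"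
      have dS: "d \<in> S" unfolding d_def using cone[of "1/l" Z] l Z by simp
      have d1: "\<pi> d = 1" unfolding d_def using hom[of "1/l" Z] l Z l_def by auto
      have ae: "AE \<omega> in M. X \<omega> / l = X \<omega> / Z \<omega> * d \<omega>"
        using Smeas(2)[OF Z(1)] by eventually_elim (use l in \<open>auto simp: d_def\<close>)
      have "(\<lambda>\<omega>. X \<omega> / l) \<in> setprod M B {Z \<in> S. \<pi> Z = 1}"
        proof -
        have "\<exists>a\<in>B. \<exists>d'\<in>{Z \<in> S. \<pi> Z = 1}. AE \<omega> in M. X \<omega> / l = a \<omega> * d' \<omega>"
          apply (rule bexI[OF _ Z(2)])
          apply (rule bexI[of _ d])
          using dS d1 ae by auto
        moreover have "(\<lambda>\<omega>. X \<omega> / l) \<in> borel_measurable M" using Cmeas[OF X] by measurable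
        ultimately show ?thesis unfolding setprod_def by blast
      qed
      then show "e \<in> {ereal l | l. l > 0 \<and> (\<lambda>\<omega>. X \<omega> / l) \<in> setprod M B {Z \<in> S. \<pi> Z = 1}}"
        using e l l_def by auto
    next
      fix e assume "e \<in> {ereal l | l. l > 0 \<and> (\<lambda>\<omega>. X \<omega> / l) \<in> setprod M B {Z \<in> S. \<pi> Z = 1}}"
      then obtain l where l: "l > 0" and e: "e = ereal l"
        and m: "(\<lambda>\<omega>. X \<omega> / l) \<in> setprod M B {Z \<in> S. \<pi> Z = 1}" by auto
      then obtain b d where b: "b \<in> B" and d: "d \<in> S" "\<pi> d = 1"
        and ae: "AE \<omega> in M. X \<omega> / l = b \<omega> * d \<omega>" unfolding setprod_def by auto
      define Z where "Z = (\<lambda>\<omega>. l * d \<omega>)"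
      have ZS: "Z \<in> S" unfolding Z_def using cone l d by auto
      have pZ: "\<pi> Z = l" unfolding Z_def using hom[of l d] l d by auto
      have ae2: "AE \<omega> in M. X \<omega> / Z \<omega> \<le> b \<omega>"
        using ae Smeas(2)[OF d(1)] by eventually_elim (use l in \<open>auto simp: Z_def field_simps\<close>)
      have "(\<lambda>\<omega>. X \<omega> / Z \<omega>) \<in> B" using down[OF b quotK[OF X ZS] ae2] .
      then show "e \<in> {ereal (\<pi> Z) | Z. Z \<in> S \<and> (\<lambda>\<omega>. X \<omega> / Z \<omega>) \<in> B}"
        using ZS pZ e by auto
    qed
    then show "MARRM B S \<pi> X =
            Inf {ereal l | l. l > 0 \<and> (\<lambda>\<omega>. X \<omega> / l) \<in> setprod M B {Z \<in> S. \<pi> Z = 1}}"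
      unfolding MARRM_def by simp
  qed
  show "\<forall>X\<in>setprod M B {Z \<in> S. \<pi> Z = 1}. \<forall>Y\<in>C.
            (AE \<omega> in M. Y \<omega> \<le> X \<omega>) \<longrightarrow> Y \<in> setprod M B {Z \<in> S. \<pi> Z = 1}"
  proof (intro ballI impI)
    fix X Y assume X: "X \<in> setprod M B {Z \<in> S. \<pi> Z = 1}" and Y: "Y \<in> C"
      and le: "AE \<omega> in M. Y \<omega> \<le> X \<omega>"
    then obtain b d where b: "b \<in> B" and d: "d \<in> S" "\<pi> d = 1"
      and ae: "AE \<omega> in M. X \<omega> = b \<omega> * d \<omega>" unfolding setprod_def by auto
    have ae2: "AE \<omega> in M. Y \<omega> / d \<omega> \<le> b \<omega>"
      using ae le Smeas(2)[OF d(1)] by eventually_elim (auto simp: field_simps)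
    have bb: "(\<lambda>\<omega>. Y \<omega> / d \<omega>) \<in> B" using down[OF b quotK[OF Y d(1)] ae2] .
    have ae3: "AE \<omega> in M. Y \<omega> = Y \<omega> / d \<omega> * d \<omega>"
      using Smeas(2)[OF d(1)] by eventually_elim auto
    show "Y \<in> setprod M B {Z \<in> S. \<pi> Z = 1}"
      unfolding setprod_def using Cmeas[OF Y] bb d ae3 by (intro CollectI conjI bexI[of _ "\<lambda>\<omega>. Y \<omega> / d \<omega>"] bexI[of _ d]) auto
  qed
qed

end
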